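(* Let $n\ge1$ and let $\tilde d_1$ be a metric on $\mathbb R^n$ for which there exists a continuous function $f:[0,\infty)\to[0,\infty)$ with $f(1)=1$ and $\tilde d_1(ax,x)=f(|ax-x|)$ for all $x\in\mathbb R^n$ and all $a\ge0$. Then the following are equivalent: (i) $\tilde d_1=d_1$; (ii) $\mathcal C_{\tilde d_1}(P_1,P_2)=\mathcal C_{d_1}(P_1,P_2)$ for all $P_1,P_2\in\mathbb R^n$.
   Context: $|\cdot|$ is the Euclidean norm. The radial metric $d_1$ on $\mathbb R^n$ is $d_1(A,B)=|A-B|$ if $A=aB$ for some $a\in\mathbb R$, and $d_1(A,B)=|A|+|B|$ otherwise. For a metric $d$ on a set $M$ and $A,B\in M$, $\mathcal C_d(A,B)=\{X\in M:\ d(X,A)=d(X,B)+d(A,B)<+\infty\}$. *)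

theory Defs
  imports "HOL-Analysis.Analysis"
begin

definition is_metric :: "('a \<Rightarrow> 'a \<Rightarrow> real) \<Rightarrow> bool" where
  "is_metric d \<longleftrightarrow>
     (\<forall>x y. d x y \<ge> 0) \<and>
     (\<forall>x y. d x y = 0 \<longleftrightarrow> x = y) \<and>
     (\<forall>x y. d x y = d y x) \<and>
     (\<forall>x y z. d x z \<le> d x y + d y z)"

definition radial_metric :: "'a::real_normed_vector \<Rightarrow> 'a \<Rightarrow> real" where
  "radial_metric A B = (if \<exists>a::real. A = a *\<^sub>R B then norm (A - B) else norm A + norm B)"

definition metric_C :: "('a \<Rightarrow> 'a \<Rightarrow> real) \<Rightarrow> 'a \<Rightarrow> 'a \<Rightarrow> 'a set" where
  "metric_C d A B = {X. d X A = d X B + d A B}"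

end

theory Submission
  imports Defs
begin

lemma cauchy_lin:
  fixes f :: "real \<Rightarrow> real"
  assumes f0: "f 0 = 0" and pos: "\<forall>t\<ge>0. f t \<ge> 0" and f1: "f 1 = 1"
    and add: "\<And>u v. u \<ge> 0 \<Longrightarrow> v \<ge> 0 \<Longrightarrow> f (u + v) = f u + f v"
    and s: "s \<ge> 0"
  shows "f s = s"
proof -
  have mult: "f (real n * u) = real n * f u" if "u \<ge> 0" for n u
  proof (induction n)
    case 0 then show ?case using f0 by simp
  next
    case (Suc n)
    have "f (real (Suc n) * u) = f (real n * u + u)" by (simp add: algebra_simps)
    also have "\<dots> = f (real n * u) + f u" using add that by simp
    finally show ?case using Suc by (simp add: algebra_simps)
  qed
  have frac: "f (real k / real m) = real k / real m" if "m \<ge> 1" for k m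
  proof -
    have "1 = f (real m * (1 / real m))" using that f1 by simp
    also have "\<dots> = real m * f (1 / real m)" using mult[of "1/real m" m] by simp
    finally have "f (1/real m) = 1 / real m" using that by (simp add: field_simps)
    moreover have "f (real k / real m) = real k * f (1 / real m)"
      using mult[of "1/real m" k] by simp
    ultimately show ?thesis by simp
  qed
  have mono: "f u \<le> f v" if "0 \<le> u" "u \<le> v" for u v
  proof -
    have "f v = f u + f (v - u)" using add[of u "v-u"] that by simp
    then show ?thesis using pos that by simp
  qed
  have bound: "\<bar>f s - s\<bar> \<le> 1 / real m" if "m \<ge> 1" for m
  proof -
    define k where "k = nat \<lfloor>real m * s\<rfloor>"
    have mpos: "real m > 0" using that by simp
    have k1: "real k \<le> real m * s" unfolding k_def using s mpos by simp
    have k2: "real m * s < real k + 1" unfolding k_def using s mpos by linarith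
    have a: "real k / real m \<le> s" using k1 mpos by (simp add: field_simps)
    have b: "s \<le> real (k+1) / real m" using k2 mpos by (simp add: field_simps)
    have "real k / real m \<le> f s" using mono[OF _ a] frac[OF that] by simp
    moreover have "f s \<le> real (k+1) / real m" using mono[OF s b] frac[OF that, of "k+1"] by simp
    moreover have "real (k+1) / real m = real k / real m + 1 / real m"
      by (simp add: add_divide_distrib)
    ultimately show ?thesis using a b by linarith
  qed
  show ?thesis
  proof (rule ccontr)
    assume "f s \<noteq> s"
    then have d: "\<bar>f s - s\<bar> > 0" by simp
    obtain m :: nat where m: "real m > 1 / \<bar>f s - s\<bar>" using reals_Archimedean2 by blast
    have "real m > 0" using m d by (meson less_trans zero_less_divide_1_iff)
    then have m1: "m \<ge> 1" by simp
    have "\<bar>f s - s\<bar> \<le> 1 / real m" using bound[OF m1] .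
    then have "\<bar>f s - s\<bar> * real m \<le> 1" using m1 by (simp add: field_simps)
    moreover have "1 < real m * \<bar>f s - s\<bar>" using m d by (simp add: field_simps)
    ultimately show False by (simp add: algebra_simps)
  qed
qed

lemma radial_zero: "radial_metric (X::'a::real_normed_vector) 0 = norm X"
  unfolding radial_metric_def by auto

lemma radial_line:
  fixes e :: "'a::real_normed_vector"
  assumes "norm e = 1" "s > 0" "r > 0"
  shows "radial_metric (s *\<^sub>R e) (r *\<^sub>R e) = \<bar>s - r\<bar>"
proof -
  have "s *\<^sub>R e = (s/r) *\<^sub>R (r *\<^sub>R e)" using assms by simp
  then have "radial_metric (s *\<^sub>R e) (r *\<^sub>R e) = norm (s *\<^sub>R e - r *\<^sub>R e)"
    unfolding radial_metric_def by meson
  also have "\<dots> = norm ((s - r) *\<^sub>R e)" by (simp add: algebra_simps)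
  also have "\<dots> = \<bar>s - r\<bar>" using assms by simp
  finally show ?thesis .
qed

theorem theorem3p2:
  fixes dt :: "'a::euclidean_space \<Rightarrow> 'a \<Rightarrow> real"
    and f :: "real \<Rightarrow> real"
  assumes "is_metric dt"
    and "continuous_on {0..} f"
    and "\<forall>t\<ge>0. f t \<ge> 0"
    and "f 1 = 1"
    and "\<forall>x. \<forall>a::real\<ge>0. dt (a *\<^sub>R x) x = f (norm (a *\<^sub>R x - x))"
  shows "dt = radial_metric \<longleftrightarrow>
         (\<forall>P1 P2. metric_C dt P1 P2 = metric_C radial_metric P1 P2)"
proof
  assume "dt = radial_metric" then show "\<forall>P1 P2. metric_C dt P1 P2 = metric_C radial_metric P1 P2" by simp
next
  assume C: "\<forall>P1 P2. metric_C dt P1 P2 = metric_C radial_metric P1 P2"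
  have met: "\<And>x y. dt x y \<ge> 0" "\<And>x y. dt x y = 0 \<longleftrightarrow> x = y" "\<And>x y. dt x y = dt y x"
    using assms(1) unfolding is_metric_def by blast+
  have hyp: "\<And>x a. a \<ge> 0 \<Longrightarrow> dt (a *\<^sub>R x) x = f (norm (a *\<^sub>R x - x))" using assms(5) by blast
  have transfer: "dt X P1 = dt X P2 + dt P1 P2"
    if "radial_metric X P1 = radial_metric X P2 + radial_metric P1 P2" for X P1 P2
  proof -
    have "X \<in> metric_C radial_metric P1 P2" using that unfolding metric_C_def by simp
    then have "X \<in> metric_C dt P1 P2" using C by simp
    then show ?thesis unfolding metric_C_def by simp
  qed
  have f0: "f 0 = 0" using hyp[of 0 0] met(2)[of 0 0] by simp
  obtain e :: 'a where e: "e \<in> Basis" using nonempty_Basis by blast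
  have ne: "norm e = 1" using e by simp
  have dline: "dt (s *\<^sub>R e) (r *\<^sub>R e) = f \<bar>s - r\<bar>" if "s \<ge> 0" "r > 0" for s r
  proof -
    have "dt (s *\<^sub>R e) (r *\<^sub>R e) = dt ((s/r) *\<^sub>R (r *\<^sub>R e)) (r *\<^sub>R e)" using that by simp
    also have "\<dots> = f (norm ((s/r) *\<^sub>R (r *\<^sub>R e) - r *\<^sub>R e))"
      using hyp[of "s/r" "r *\<^sub>R e"] that by simp
    also have "(s/r) *\<^sub>R (r *\<^sub>R e) - r *\<^sub>R e = (s - r) *\<^sub>R e" using that by (simp add: algebra_simps)
    finally show ?thesis using ne by simp
  qed
  have add: "f (u + v) = f u + f v" if "u \<ge> 0" "v \<ge> 0" for u v
  proof (cases "v = 0")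
    case True then show ?thesis using f0 by simp
  next
    case False
    then have v: "v > 0" using that by simp
    define c where "c = u + 1"
    define b where "b = u + 1 + v"
    have cp: "c > 0" "b > 0" "(1::real) > 0" using that v unfolding c_def b_def by auto
    have "radial_metric ((1::real) *\<^sub>R e) (b *\<^sub>R e) = radial_metric (1 *\<^sub>R e) (c *\<^sub>R e) + radial_metric (b *\<^sub>R e) (c *\<^sub>R e)"
      using radial_line[OF ne, of 1 b] radial_line[OF ne, of 1 c] radial_line[OF ne, of b c] cp that v
      unfolding c_def b_def by simp
    then have "dt (1 *\<^sub>R e) (b *\<^sub>R e) = dt (1 *\<^sub>R e) (c *\<^sub>R e) + dt (b *\<^sub>R e) (c *\<^sub>R e)" by (rule transfer)
    then have "f \<bar>1 - b\<bar> = f \<bar>1 - c\<bar> + f \<bar>b - c\<bar>"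
      using dline cp by (metis less_eq_real_def)
    then show ?thesis unfolding b_def c_def using that v by (simp add: add.commute)
  qed
  have fid: "\<And>s. s \<ge> 0 \<Longrightarrow> f s = s"
    using cauchy_lin[OF f0 assms(3) assms(4)] add by blast
  have d0: "dt X 0 = norm X" for X
  proof -
    have "dt (0 *\<^sub>R X) X = f (norm (0 *\<^sub>R X - X))" using hyp[of 0 X] by simp
    then have "dt 0 X = norm X" using fid by simp
    then show ?thesis using met(3) by metis
  qed
  have sumcase: "dt A B = norm A + norm B" if "radial_metric A B = norm A + norm B" for A B
  proof -
    have "radial_metric A B = radial_metric A 0 + radial_metric B 0"
      using that radial_zero by metis
    then have "dt A B = dt A 0 + dt B 0" by (rule transfer)
    then show ?thesis using d0 by simp
  qed
  show "dt = radial_metric"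
  proof (intro ext)
    fix A B :: 'a
    show "dt A B = radial_metric A B"
    proof (cases "\<exists>a\<ge>0. A = a *\<^sub>R B")
      case True
      then obtain a where a: "a \<ge> 0" "A = a *\<^sub>R B" by blast
      have "dt A B = norm (A - B)" using hyp[OF a(1), of B] a fid by simp
      moreover have "radial_metric A B = norm (A - B)" using a unfolding radial_metric_def by auto
      ultimately show ?thesis by simp
    next
      case False
      have "radial_metric A B = norm A + norm B"
      proof (cases "\<exists>a. A = a *\<^sub>R B")
        case True
        then obtain a where a: "A = a *\<^sub>R B" by blast
        have "\<not> a \<ge> 0" using False a by blast
        then have an: "a < 0" by simp
        have "radial_metric A B = norm (A - B)" using a unfolding radial_metric_def by auto
        also have "A - B = (a - 1) *\<^sub>R B" using a by (simp add: algebra_simps)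
        also have "norm ((a - 1) *\<^sub>R B) = (1 - a) * norm B" using an by simp
        also have "\<dots> = norm A + norm B" using a an by (simp add: algebra_simps)
        finally show ?thesis .
      next
        case False
        then show ?thesis unfolding radial_metric_def by simp
      qed
      then show ?thesis using sumcase by simp
    qed
  qed
qed

end
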